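(* Let $\alpha\in(1,2)$ and let $p\ge2$ be an integer. There is a constant $c^L_{p,\alpha}$ depending only on $p$ and $\alpha$ such that for every $n\ge1$ and all $i,j\in\{2,\dots,n+p-1\}$, $$|(A_n^L)_{i-1,j-1}|\le\begin{cases}0, & \eta_i\le\xi_j,\\ c^L_{p,\alpha}\,n^\alpha, & \xi_j<\eta_i\le\xi_{j+p+1}+\frac1n,\\ c^L_{p,\alpha}\,(\eta_i-\xi_{j+p+1})^{-\alpha}, & \xi_{j+p+1}+\frac1n<\eta_i.\end{cases}$$
   Context: Fix integers $p\ge2$, $n\ge1$. The uniform open knot sequence on $[0,1]$ is $\xi_1=\dots=\xi_{p+1}=0$, $\xi_{i+p+1}=i/n$ for $i=0,\dots,n$, $\xi_{p+n+1}=\dots=\xi_{2p+n+1}=1$. The B-splines are defined by $N^0_i=\mathbf 1_{[\xi_i,\xi_{i+1})}$ for $1\le i\le n+2p$, and $N^k_i(x)=\frac{x-\xi_i}{\xi_{i+k}-\xi_i}N^{k-1}_i(x)+\frac{\xi_{i+k+1}-x}{\xi_{i+k+1}-\xi_{i+1}}N^{k-1}_{i+1}(x)$ for $1\le k\le p$, $1\le i\le n+2p-k$ (fractions with zero denominator are zero); $N^p_i$, $i=1,\dots,n+p$, are the degree-$p$ B-splines on $[0,1]$. The Greville abscissae are $\eta_i=\frac{\xi_{i+1}+\dots+\xi_{i+p}}{p}$, $i=2,\dots,n+p-1$. For $\alpha\in(1,2)$ the left Riemann–Liouville derivative on $[0,1]$ is $D^\alpha_{0,x}u(x)=\frac{1}{\Gamma(2-\alpha)}\frac{d^2}{dx^2}\int_0^x(x-y)^{1-\alpha}u(y)\,dy$.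 The matrix $A_n^L$ is the $(n+p-2)\times(n+p-2)$ matrix with $(A_n^L)_{i,j}=D^\alpha_{0,x}N^p_{j+1}(\eta_{i+1})$, $i,j=1,\dots,n+p-2$. *)

theory Defs
  imports "HOL-Analysis.Analysis"
begin

text \<open>Uniform open knot vector on [0,1], 1-based: knot p n k = xi_k, k = 1..2p+n+1.\<close>
definition knot :: "nat \<Rightarrow> nat \<Rightarrow> nat \<Rightarrow> real" where
  "knot p n k = (if k \<le> p + 1 then 0
                 else if k \<le> p + n + 1 then real (k - (p + 1)) / real n
                 else 1)"

text \<open>B-splines N^k_i of degree k (Cox-de Boor); division by zero yields 0 in HOL,
  matching the convention that fractions with zero denominator are zero.\<close>
fun bspline :: "nat \<Rightarrow> nat \<Rightarrow> nat \<Rightarrow> nat \<Rightarrow> real \<Rightarrow> real" where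
  "bspline p n 0 i x =
     (if knot p n i \<le> x \<and> x < knot p n (i + 1) then 1 else 0)"
| "bspline p n (Suc k) i x =
     (x - knot p n i) / (knot p n (i + Suc k) - knot p n i) * bspline p n k i x
   + (knot p n (i + Suc k + 1) - x) / (knot p n (i + Suc k + 1) - knot p n (i + 1))
       * bspline p n k (i + 1) x"

definition greville :: "nat \<Rightarrow> nat \<Rightarrow> nat \<Rightarrow> real" where
  "greville p n i = (\<Sum>k = i + 1..i + p. knot p n k) / real p"

definition RL_left :: "real \<Rightarrow> (real \<Rightarrow> real) \<Rightarrow> real \<Rightarrow> real" where
  "RL_left \<alpha> u x = 1 / Gamma (2 - \<alpha>) *
     deriv (deriv (\<lambda>t. integral {0..t} (\<lambda>y. (t - y) powr (1 - \<alpha>) * u y))) x"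

text \<open>Entries of the matrix A_n^L (1-based indices i,j = 1..n+p-2).\<close>
definition AL :: "real \<Rightarrow> nat \<Rightarrow> nat \<Rightarrow> nat \<Rightarrow> nat \<Rightarrow> real" where
  "AL \<alpha> p n i j = RL_left \<alpha> (bspline p n p (j + 1)) (greville p n (i + 1))"

end

theory Submission
  imports Defs
begin


definition kn :: "nat \<Rightarrow> nat \<Rightarrow> nat \<Rightarrow> nat" where
  "kn p n k = min (k - (p+1)) n"

lemma knot_kn: "n \<ge> 1 \<Longrightarrow> knot p n k = real (kn p n k) / real n"
  by (auto simp: knot_def kn_def min_def)

lemma kn_mono: "k \<le> l \<Longrightarrow> kn p n k \<le> kn p n l"
  by (auto simp: kn_def min_def)

lemma kn_diff: "k \<le> l \<Longrightarrow> kn p n l - kn p n k \<le> l - k"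
  by (auto simp: kn_def min_def)

lemma knot_mono: "n \<ge> 1 \<Longrightarrow> k \<le> l \<Longrightarrow> knot p n k \<le> knot p n l"
  by (simp add: knot_kn divide_right_mono kn_mono)

lemma knot_diff_le: assumes "n \<ge> 1" "k \<le> l"
  shows "knot p n l - knot p n k \<le> real (l - k) / real n"
proof -
  have "kn p n k \<le> kn p n l" using kn_mono assms by blast
  hence "real (kn p n l) - real (kn p n k) = real (kn p n l - kn p n k)" by simp
  also have "\<dots> \<le> real (l - k)" using kn_diff[OF assms(2)] by simp
  finally show ?thesis using assms by (simp add: knot_kn diff_divide_distrib[symmetric] divide_right_mono)
qed

lemma knot_diff_ge: assumes "n \<ge> 1" "knot p n k < knot p n l"
  shows "1 / real n \<le> knot p n l - knot p n k"
proof -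
  have "kn p n k < kn p n l" using assms by (simp add: knot_kn divide_strict_right_mono_neg)
     (smt (verit) divide_right_mono of_nat_0_le_iff of_nat_mono not_less)
  hence "real (kn p n l) - real (kn p n k) \<ge> 1" by linarith
  thus ?thesis using assms by (simp add: knot_kn diff_divide_distrib[symmetric] divide_right_mono)
qed

lemma knot_ge0: "n \<ge> 1 \<Longrightarrow> 0 \<le> knot p n k" by (simp add: knot_kn)
lemma knot_le1: "n \<ge> 1 \<Longrightarrow> knot p n k \<le> 1" by (simp add: knot_kn kn_def)


lemma bspline_supp:
  assumes "n \<ge> 1" "bspline p n k i x \<noteq> 0"
  shows "knot p n i \<le> x \<and> x < knot p n (i+k+1)"
  using assms(2)
proof (induction k arbitrary: i)
  case 0 then show ?case by (auto split: if_splits)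
next
  case (Suc k)
  have m1: "knot p n i \<le> knot p n (i+1)" "knot p n (i+k+1) \<le> knot p n (i+Suc k+1)"
    using knot_mono[OF assms(1)] by auto
  from Suc.prems have "bspline p n k i x \<noteq> 0 \<or> bspline p n k (i+1) x \<noteq> 0" by auto
  then show ?case
  proof
    assume "bspline p n k i x \<noteq> 0" from Suc.IH[OF this] m1 show ?thesis by auto
  next
    assume "bspline p n k (i+1) x \<noteq> 0" from Suc.IH[OF this] m1 show ?thesis by auto
  qed
qed

lemma frac01: "a \<le> x \<Longrightarrow> x \<le> b \<Longrightarrow> \<bar>(x - a) / (b - a)\<bar> \<le> (1::real)"
  by (cases "b = a") (auto simp: abs_le_iff divide_le_eq_1 le_divide_eq)
lemma frac01': "a \<le> x \<Longrightarrow> x \<le> b \<Longrightarrow> \<bar>(b - x) / (b - a)\<bar> \<le> (1::real)"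
  by (cases "b = a") (auto simp: abs_le_iff divide_le_eq_1 le_divide_eq)

lemma bspline_bound:
  assumes "n \<ge> 1"
  shows "\<bar>bspline p n k i x\<bar> \<le> 2 ^ k"
proof (induction k arbitrary: i)
  case 0 then show ?case by auto
next
  case (Suc k)
  let ?w1 = "(x - knot p n i) / (knot p n (i + Suc k) - knot p n i)"
  let ?w2 = "(knot p n (i + Suc k + 1) - x) / (knot p n (i + Suc k + 1) - knot p n (i + 1))"
  have a: "\<bar>?w1 * bspline p n k i x\<bar> \<le> 2^k"
  proof (cases "bspline p n k i x = 0")
    case False
    from bspline_supp[OF assms False] have "\<bar>?w1\<bar> \<le> 1" by (intro frac01) auto
    then have "\<bar>?w1\<bar> * \<bar>bspline p n k i x\<bar> \<le> 1 * 2^k" using Suc.IH[of i] by (intro mult_mono) auto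
    then show ?thesis by (simp add: abs_mult)
  qed simp
  have b: "\<bar>?w2 * bspline p n k (i+1) x\<bar> \<le> 2^k"
  proof (cases "bspline p n k (i+1) x = 0")
    case False
    from bspline_supp[OF assms False] have "\<bar>?w2\<bar> \<le> 1" by (intro frac01') auto
    then have "\<bar>?w2\<bar> * \<bar>bspline p n k (i+1) x\<bar> \<le> 1 * 2^k" using Suc.IH[of "i+1"] by (intro mult_mono) auto
    then show ?thesis by (simp add: abs_mult)
  qed simp
  have e: "bspline p n (Suc k) i x = ?w1 * bspline p n k i x + ?w2 * bspline p n k (i+1) x"
    by (simp only: bspline.simps)
  show ?case unfolding e using a b abs_triangle_ineq[of "?w1 * bspline p n k i x" "?w2 * bspline p n k (i+1) x"] by simp
qed

fun co :: "nat \<Rightarrow> nat \<Rightarrow> nat \<Rightarrow> nat \<Rightarrow> nat \<Rightarrow> nat \<Rightarrow> real" where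
  "co p n 0 i m r = (if i = m \<and> r = 0 then 1 else 0)"
| "co p n (Suc k) i m r =
     ((if r = 0 then 0 else co p n k i m (r-1)) + (knot p n m - knot p n i) * co p n k i m r)
       / (knot p n (i + Suc k) - knot p n i)
   + ((knot p n (i + Suc k + 1) - knot p n m) * co p n k (i+1) m r
       - (if r = 0 then 0 else co p n k (i+1) m (r-1)))
       / (knot p n (i + Suc k + 1) - knot p n (i+1))"

lemma co_deg: "k < r \<Longrightarrow> co p n k i m r = 0"
proof (induction k arbitrary: i r)
  case (Suc k)
  then have "r \<noteq> 0" "k < r - 1" "k < r" by auto
  then show ?case using Suc.IH[of "r-1"] Suc.IH[of r] by (simp only: co.simps) simp
qed simp

lemma co_supp: "m < i \<or> i + k < m \<Longrightarrow> co p n k i m r = 0"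
proof (induction k arbitrary: i r)
  case (Suc k)
  then have "m < i \<or> i + k < m" "m < i + 1 \<or> (i + 1) + k < m" by auto
  then show ?case using Suc.IH by (simp only: co.simps) simp
qed auto

definition pcf :: "nat \<Rightarrow> nat \<Rightarrow> nat \<Rightarrow> nat \<Rightarrow> nat \<Rightarrow> real \<Rightarrow> real" where
  "pcf p n k i m y = (\<Sum>r\<le>k. co p n k i m r * (y - knot p n m) ^ r)"

lemma pcf_0: "pcf p n 0 i m y = (if i = m then 1 else 0)"
  by (simp add: pcf_def)

lemma sum_shift1:
  fixes f :: "nat \<Rightarrow> real"
  assumes "f (Suc k) = 0"
  shows "(\<Sum>r\<le>Suc k. (if r = 0 then 0 else f (r-1)) * z ^ r) = z * (\<Sum>r\<le>k. f r * z ^ r)"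
  by (simp only: sum.atMost_Suc_shift) (simp add: sum_distrib_left mult_ac)

lemma sum_drop1:
  fixes f :: "nat \<Rightarrow> real"
  assumes "f (Suc k) = 0"
  shows "(\<Sum>r\<le>Suc k. f r * z ^ r) = (\<Sum>r\<le>k. f r * z ^ r)"
  using assms by simp

lemma aux_sum: fixes a b g h :: "nat \<Rightarrow> real"
  shows "(\<Sum>r\<in>S. (a r + c * b r)/D1 + (e * g r - h r)/D2) = ((\<Sum>r\<in>S. a r) + c * (\<Sum>r\<in>S. b r))/D1 + (e * (\<Sum>r\<in>S. g r) - (\<Sum>r\<in>S. h r))/D2"
  by (simp add: sum.distrib sum_subtractf sum_distrib_left sum_divide_distrib add_divide_distrib diff_divide_distrib)

lemma aux_dist: "((a + c*b)/d1 + (e*g - h)/d2) * w = (a*w + c*(b*w))/d1 + (e*(g*w) - h*w)/(d2::real)"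
  by (simp add: algebra_simps add_divide_distrib diff_divide_distrib)

lemma pcf_Suc:
  "pcf p n (Suc k) i m y =
     (y - knot p n i) / (knot p n (i + Suc k) - knot p n i) * pcf p n k i m y
   + (knot p n (i + Suc k + 1) - y) / (knot p n (i + Suc k + 1) - knot p n (i+1)) * pcf p n k (i+1) m y"
proof -
  define z where "z = y - knot p n m"
  define D1 where "D1 = knot p n (i + Suc k) - knot p n i"
  define D2 where "D2 = knot p n (i + Suc k + 1) - knot p n (i+1)"
  define f where "f = co p n k i m"
  define g where "g = co p n k (i+1) m"
  have f0: "f (Suc k) = 0" "g (Suc k) = 0" unfolding f_def g_def by (auto intro: co_deg)
  have "pcf p n (Suc k) i m y =
     (\<Sum>r\<le>Suc k. ((if r = 0 then 0 else f (r-1)) * z^r + (knot p n m - knot p n i) * (f r * z^r)) / D1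
        + ((knot p n (i + Suc k + 1) - knot p n m) * (g r * z^r) - (if r = 0 then 0 else g (r-1)) * z^r) / D2)"
    unfolding pcf_def z_def f_def g_def D1_def D2_def
    by (intro sum.cong refl) (simp only: co.simps aux_dist)
  also have "\<dots> = ((\<Sum>r\<le>Suc k. (if r = 0 then 0 else f (r-1)) * z^r) + (knot p n m - knot p n i) * (\<Sum>r\<le>Suc k. f r * z^r)) / D1
        + ((knot p n (i + Suc k + 1) - knot p n m) * (\<Sum>r\<le>Suc k. g r * z^r) - (\<Sum>r\<le>Suc k. (if r = 0 then 0 else g (r-1)) * z^r)) / D2"
    by (rule aux_sum)
  also have "\<dots> = (z * (\<Sum>r\<le>k. f r * z^r) + (knot p n m - knot p n i) * (\<Sum>r\<le>k. f r * z^r)) / D1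
        + ((knot p n (i + Suc k + 1) - knot p n m) * (\<Sum>r\<le>k. g r * z^r) - z * (\<Sum>r\<le>k. g r * z^r)) / D2"
    by (simp only: sum_shift1[of f k z, OF f0(1)] sum_shift1[of g k z, OF f0(2)] sum_drop1[of f k z, OF f0(1)] sum_drop1[of g k z, OF f0(2)])
  also have "\<dots> = (y - knot p n i) / D1 * pcf p n k i m y + (knot p n (i + Suc k + 1) - y) / D2 * pcf p n k (i+1) m y"
  proof -
    define S where "S = (\<Sum>r\<le>k. f r * z^r)"
    define T where "T = (\<Sum>r\<le>k. g r * z^r)"
    have PS: "pcf p n k i m y = S" "pcf p n k (i+1) m y = T" unfolding S_def T_def pcf_def f_def g_def z_def by simp_all
    have h1: "z * S + (knot p n m - knot p n i) * S = (y - knot p n i) * S" by (simp add: z_def algebra_simps)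
    have h2: "(knot p n (i + Suc k + 1) - knot p n m) * T - z * T = (knot p n (i + Suc k + 1) - y) * T" by (simp add: z_def algebra_simps)
    show ?thesis unfolding PS S_def[symmetric] T_def[symmetric] h1 h2 by simp
  qed
  finally show ?thesis unfolding D1_def D2_def .
qed

lemma bspline_pcf:
  assumes "n \<ge> 1" "knot p n m \<le> y" "y < knot p n (m+1)"
  shows "bspline p n k i y = pcf p n k i m y"
proof (induction k arbitrary: i)
  case 0
  have "(knot p n i \<le> y \<and> y < knot p n (i + 1)) = (i = m)"
  proof
    assume h: "knot p n i \<le> y \<and> y < knot p n (i + 1)"
    show "i = m"
    proof (rule ccontr)
      assume "i \<noteq> m"
      hence "i + 1 \<le> m \<or> m + 1 \<le> i" by auto
      thus False using h assms knot_mono[OF assms(1), where k="i+1" and l=m and p=p] knot_mono[OF assms(1), where k="m+1" and l=i and p=p] by auto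
    qed
  qed (use assms in auto)
  then show ?case by (simp add: pcf_0)
next
  case (Suc k) then show ?case by (simp only: bspline.simps pcf_Suc)
qed


definition gg :: "nat \<Rightarrow> nat \<Rightarrow> nat \<Rightarrow> nat \<Rightarrow> real" where
  "gg p n m l = (if l = m then 1 else knot p n l - knot p n m)"

definition PP :: "nat \<Rightarrow> nat \<Rightarrow> nat \<Rightarrow> nat \<Rightarrow> nat \<Rightarrow> real" where
  "PP p n m i k = (\<Prod>l\<in>{i..i+k+1}. gg p n m l)"

definition Jmp :: "nat \<Rightarrow> nat \<Rightarrow> nat \<Rightarrow> nat \<Rightarrow> nat \<Rightarrow> real" where
  "Jmp p n m k i = (if i \<le> m \<and> m \<le> i+k+1 then (knot p n (i+k+1) - knot p n i) / PP p n m i k else 0)"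

lemma alg4: assumes "a - mm \<noteq> 0" "b - mm \<noteq> 0" "h \<noteq> 0" shows
   "(y-a)/((a-mm)*h) + (b-y)/(h*(b-mm)) = (b-a)/((a-mm)*h*(b-mm)) * (y-(mm::real))"
proof -
  define D where "D = (a-mm)*h*(b-mm)"
  have e: "(y-a)*(b-mm) + (b-y)*(a-mm) = (b-a)*(y-mm)" by (simp add: algebra_simps)
  have 1: "(y-a)/((a-mm)*h) = (y-a)*(b-mm)/D" unfolding D_def using assms by simp
  have 2: "(b-y)/(h*(b-mm)) = (b-y)*(a-mm)/D" unfolding D_def using assms by simp
  show ?thesis unfolding 1 2 D_def[symmetric] add_divide_distrib[symmetric] e by simp
qed

locale simpknot =
  fixes p n m :: nat
  assumes n1: "n \<ge> 1" and m1: "m \<ge> 1"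
    and lt1: "knot p n (m-1) < knot p n m" and lt2: "knot p n m < knot p n (m+1)"
begin

lemma lt_m: "l < m \<Longrightarrow> knot p n l < knot p n m"
proof -
  assume "l < m" hence "l \<le> m - 1" by auto
  hence "knot p n l \<le> knot p n (m-1)" by (rule knot_mono[OF n1])
  with lt1 show ?thesis by auto
qed
lemma gt_m: "m < l \<Longrightarrow> knot p n m < knot p n l"
  using knot_mono[OF n1, of "m+1" l p] lt2 by auto

lemma gg_nz: "gg p n m l \<noteq> 0"
  unfolding gg_def using lt_m gt_m by (cases "l < m"; cases "m < l") force+

lemma PP_nz: "PP p n m i k \<noteq> 0"
  unfolding PP_def using gg_nz by auto

lemma PP_Suc: "PP p n m i (Suc k) = PP p n m i k * gg p n m (i+k+2)"
  unfolding PP_def by simp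

definition H where "H i k = (\<Prod>l\<in>{Suc i..i+k+1}. gg p n m l)"

lemma PP_a: "PP p n m i k = gg p n m i * H i k"
  unfolding PP_def H_def by (rule prod.atLeast_Suc_atMost) simp

lemma PP_b: "PP p n m (i+1) k = H i k * gg p n m (i+k+2)"
  unfolding PP_def H_def by (simp add: add.commute)

lemma H_nz: "H i k \<noteq> 0"
  unfolding H_def using gg_nz by auto

lemma key:
  "(y - knot p n i) / (knot p n (i + Suc k) - knot p n i) * Jmp p n m k i
   + (knot p n (i + Suc k + 1) - y) / (knot p n (i + Suc k + 1) - knot p n (i+1)) * Jmp p n m k (i+1)
   = Jmp p n m (Suc k) i * (y - knot p n m)"
proof -
  consider "m < i \<or> i + k + 2 < m" | "m = i" | "m = i + k + 2" | "i < m \<and> m \<le> i + k + 1" by linarith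
  then show ?thesis
  proof cases
    case 1 then show ?thesis by (auto simp: Jmp_def)
  next
    case 2
    have d1: "knot p n (i + Suc k) - knot p n i \<noteq> 0" using gt_m[of "i + Suc k"] 2 by auto
    have g2: "gg p n m (i+k+2) = knot p n (i+k+2) - knot p n i" using 2 by (simp add: gg_def)
    have d2: "knot p n (i+k+2) - knot p n i \<noteq> 0" using gt_m[of "i + k + 2"] 2 by auto
    have J0: "Jmp p n m k (i+1) = 0" using 2 by (simp add: Jmp_def)
    have J1: "Jmp p n m k i = (knot p n (i+k+1) - knot p n i) / PP p n m i k" using 2 by (simp add: Jmp_def)
    have J2: "Jmp p n m (Suc k) i = (knot p n (i+k+2) - knot p n i) / (PP p n m i k * (knot p n (i+k+2) - knot p n i))"
      unfolding Jmp_def PP_Suc g2 using 2 by simp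
    show ?thesis unfolding J0 J1 J2 using d1 d2 PP_nz[of i k] 2 by (simp add: field_simps)
  next
    case 3
    have d2: "knot p n (i + Suc k + 1) - knot p n (i+1) \<noteq> 0" using lt_m[of "i+1"] 3 by auto
    have g1: "gg p n m i = knot p n i - knot p n m" using 3 by (simp add: gg_def)
    have g2: "gg p n m (i+k+2) = 1" using 3 by (simp add: gg_def)
    have J0: "Jmp p n m k i = 0" using 3 by (simp add: Jmp_def)
    have J1: "Jmp p n m k (i+1) = (knot p n (i+k+2) - knot p n (i+1)) / H i k"
      using 3 PP_b[of i k] g2 by (simp add: Jmp_def)
    have J2: "Jmp p n m (Suc k) i = (knot p n (i+k+2) - knot p n i) / ((knot p n i - knot p n m) * H i k)"
      using 3 PP_Suc[of i k] PP_a[of i k] g1 g2 by (simp add: Jmp_def)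
    have d3: "knot p n i - knot p n m \<noteq> 0" using lt_m[of i] 3 by auto
    have e: "knot p n (i+k+2) = knot p n m" using 3 by simp
    show ?thesis unfolding J0 J1 J2 using d2 d3 H_nz[of i k] 3 e by (simp add: field_simps)
  next
    case 4
    have d1: "knot p n (i + Suc k) - knot p n i \<noteq> 0" using lt_m[of i] knot_mono[OF n1, of m "i + Suc k" p] 4 by auto
    have d2: "knot p n (i + Suc k + 1) - knot p n (i+1) \<noteq> 0"
      using gt_m[of "i + Suc k + 1"] knot_mono[OF n1, of "i+1" m p] 4 by auto
    have g1: "gg p n m i = knot p n i - knot p n m" using 4 by (simp add: gg_def)
    have g2: "gg p n m (i+k+2) = knot p n (i+k+2) - knot p n m" using 4 by (simp add: gg_def)
    have d3: "knot p n i - knot p n m \<noteq> 0" using lt_m[of i] 4 by auto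
    have d4: "knot p n (i+k+2) - knot p n m \<noteq> 0" using gt_m[of "i+k+2"] 4 by auto
    have J1: "Jmp p n m k i = (knot p n (i+k+1) - knot p n i) / ((knot p n i - knot p n m) * H i k)"
      using 4 PP_a[of i k] g1 by (simp add: Jmp_def)
    have J2: "Jmp p n m k (i+1) = (knot p n (i+k+2) - knot p n (i+1)) / (H i k * (knot p n (i+k+2) - knot p n m))"
      using 4 PP_b[of i k] g2 by (simp add: Jmp_def)
    have J3: "Jmp p n m (Suc k) i = (knot p n (i+k+2) - knot p n i) / ((knot p n i - knot p n m) * H i k * (knot p n (i+k+2) - knot p n m))"
      using 4 PP_Suc[of i k] PP_a[of i k] g1 g2 by (simp add: Jmp_def)
    have dd1: "knot p n (i+k+1) - knot p n i \<noteq> 0" using d1 by simp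
    have dd2: "knot p n (i+k+2) - knot p n (i+1) \<noteq> 0" using d2 by simp
    have c1: "(y - knot p n i) / (knot p n (i + Suc k) - knot p n i) * Jmp p n m k i = (y - knot p n i) / ((knot p n i - knot p n m) * H i k)"
      unfolding J1 using dd1 by simp
    have c2: "(knot p n (i + Suc k + 1) - y) / (knot p n (i + Suc k + 1) - knot p n (i+1)) * Jmp p n m k (i+1) = (knot p n (i+k+2) - y) / (H i k * (knot p n (i+k+2) - knot p n m))"
      unfolding J2 using dd2 by simp
    show ?thesis unfolding c1 c2 J3 using alg4[OF d3 d4 H_nz[of i k]] by simp
  qed
qed

lemma jump: "pcf p n k i m y - pcf p n k i (m-1) y = Jmp p n m k i * (y - knot p n m) ^ k"
proof (induction k arbitrary: i)
  case 0
  have a: "i \<le> m \<and> m \<le> i + 1 \<longleftrightarrow> i = m \<or> i = m - 1" using m1 by auto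
  have P0: "PP p n m i 0 = gg p n m i * gg p n m (i+1)" unfolding PP_def by simp
  show ?case
  proof (cases "i = m \<or> i = m - 1")
    case True
    then show ?thesis
    proof
      assume h: "i = m"
      have "PP p n m i 0 = knot p n (m+1) - knot p n m" unfolding P0 gg_def using h by simp
      moreover have "i \<noteq> m - 1" using h m1 by auto
      ultimately show ?thesis using lt2 h by (simp add: pcf_0 Jmp_def)
    next
      assume h: "i = m - 1"
      then have "i \<noteq> m" "i + 1 = m" using m1 by auto
      moreover have "PP p n m i 0 = knot p n i - knot p n m" unfolding P0 gg_def using h m1 by simp
      moreover have "(knot p n m - knot p n (m-1)) / (knot p n (m-1) - knot p n m) = -1"
        using lt1 by (simp add: divide_eq_minus_1_iff)
      ultimately show ?thesis using h lt1 by (simp add: pcf_0 Jmp_def)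
    qed
  next
    case False
    then show ?thesis using a by (auto simp: pcf_0 Jmp_def)
  qed
next
  case (Suc k)
  define w1 where "w1 = (y - knot p n i) / (knot p n (i + Suc k) - knot p n i)"
  define w2 where "w2 = (knot p n (i + Suc k + 1) - y) / (knot p n (i + Suc k + 1) - knot p n (i+1))"
  have "pcf p n (Suc k) i m y - pcf p n (Suc k) i (m-1) y
      = w1 * (pcf p n k i m y - pcf p n k i (m-1) y) + w2 * (pcf p n k (i+1) m y - pcf p n k (i+1) (m-1) y)"
    unfolding pcf_Suc[of p n k i m] pcf_Suc[of p n k i "m-1"] w1_def[symmetric] w2_def[symmetric] by (simp add: algebra_simps)
  also have "\<dots> = (w1 * Jmp p n m k i + w2 * Jmp p n m k (i+1)) * (y - knot p n m) ^ k"
    unfolding Suc.IH by (simp add: algebra_simps)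
  also have "\<dots> = Jmp p n m (Suc k) i * (y - knot p n m) ^ Suc k"
    unfolding w1_def w2_def key by simp
  finally show ?case .
qed

end


fun Bc :: "nat \<Rightarrow> real" where
  "Bc 0 = 1" | "Bc (Suc k) = (2 * real k + 3) * Bc k"

lemma Bc_pos: "Bc k \<ge> 1"
  by (induction k) (auto intro: order.trans[OF _ mult_right_mono[of 1]])

lemma div_bound:
  fixes N D X :: real
  assumes "N \<ge> 1" "D = 0 \<or> 1 / N \<le> D"
  shows "\<bar>X / D\<bar> \<le> N * \<bar>X\<bar>"
proof (cases "D = 0")
  case False
  with assms have D: "1/N \<le> D" "0 < D" by (auto intro: order.strict_trans2[of 0 "1/N"])
  have "\<bar>X / D\<bar> = \<bar>X\<bar> / D" using D by simp
  also have "\<dots> \<le> \<bar>X\<bar> / (1/N)" using D assms(1) by (intro divide_left_mono) auto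
  also have "\<dots> = N * \<bar>X\<bar>" by simp
  finally show ?thesis .
qed (use assms in simp)

lemma knot_gap: "n \<ge> 1 \<Longrightarrow> k \<le> l \<Longrightarrow> knot p n l - knot p n k = 0 \<or> 1 / real n \<le> knot p n l - knot p n k"
  using knot_diff_ge[of n p k l] knot_mono[of n k l p] by fastforce

lemma co_bound:
  assumes n: "n \<ge> 1"
  shows "\<bar>co p n k i m r\<bar> \<le> Bc k * real n ^ r"
proof (induction k arbitrary: i r)
  case 0 then show ?case by auto
next
  case (Suc k)
  define N where "N = real n"
  have N1: "N \<ge> 1" using n by (simp add: N_def)
  have Bk: "Bc k \<ge> 0" using Bc_pos[of k] by simp
  have hA: "\<bar>if r = 0 then 0 else co p n k j m (r-1)\<bar> \<le> Bc k * N^r / N" for j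
  proof (cases r)
    case 0 then show ?thesis using Bk N1 by simp
  next
    case (Suc r') then show ?thesis using Suc.IH[of j r'] N1 by (simp add: N_def)
  qed
  have hc1: "\<bar>(knot p n m - knot p n i) * co p n k i m r\<bar> \<le> real k / N * (Bc k * N^r)"
  proof (cases "m < i \<or> i + k < m")
    case True then show ?thesis using co_supp[OF True] Bk N1 by simp
  next
    case False
    have "0 \<le> knot p n m - knot p n i" using knot_mono[OF n, of i m p] False by simp
    moreover have "knot p n m - knot p n i \<le> real (m - i) / N" unfolding N_def using knot_diff_le[OF n, of i m p] False by simp
    moreover have "real (m - i) / N \<le> real k / N" using False N1 by (intro divide_right_mono) auto
    ultimately have "\<bar>knot p n m - knot p n i\<bar> \<le> real k / N" by simp
    then show ?thesis unfolding abs_mult using Suc.IH[of i r] by (intro mult_mono) (auto simp: N_def)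
  qed
  have hc2: "\<bar>(knot p n (i + Suc k + 1) - knot p n m) * co p n k (i+1) m r\<bar> \<le> (real k + 1) / N * (Bc k * N^r)"
  proof (cases "m < i + 1 \<or> (i + 1) + k < m")
    case True then show ?thesis using co_supp[OF True] Bk N1 by simp
  next
    case False
    have "0 \<le> knot p n (i + Suc k + 1) - knot p n m" using knot_mono[OF n, of m "i + Suc k + 1" p] False by simp
    moreover have "knot p n (i + Suc k + 1) - knot p n m \<le> real (i + Suc k + 1 - m) / N" unfolding N_def using knot_diff_le[OF n, of m "i + Suc k + 1" p] False by simp
    moreover have "real (i + Suc k + 1 - m) / N \<le> (real k + 1) / N" using False N1 by (intro divide_right_mono) auto
    ultimately have "\<bar>knot p n (i + Suc k + 1) - knot p n m\<bar> \<le> (real k + 1) / N" by simp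
    then show ?thesis unfolding abs_mult using Suc.IH[of "i+1" r] by (intro mult_mono) (auto simp: N_def)
  qed
  have gap1: "knot p n (i + Suc k) - knot p n i = 0 \<or> 1/N \<le> knot p n (i + Suc k) - knot p n i"
    using knot_gap[OF n, of i "i + Suc k" p] by (simp add: N_def)
  have gap2: "knot p n (i + Suc k + 1) - knot p n (i+1) = 0 \<or> 1/N \<le> knot p n (i + Suc k + 1) - knot p n (i+1)"
    using knot_gap[OF n, of "i+1" "i + Suc k + 1" p] by (simp add: N_def)
  have t1: "\<bar>((if r = 0 then 0 else co p n k i m (r-1)) + (knot p n m - knot p n i) * co p n k i m r)
       / (knot p n (i + Suc k) - knot p n i)\<bar> \<le> (real k + 1) * Bc k * N^r"
  proof -
    have "\<bar>((if r = 0 then 0 else co p n k i m (r-1)) + (knot p n m - knot p n i) * co p n k i m r)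
       / (knot p n (i + Suc k) - knot p n i)\<bar> \<le> N * \<bar>(if r = 0 then 0 else co p n k i m (r-1)) + (knot p n m - knot p n i) * co p n k i m r\<bar>"
      using div_bound[OF N1 gap1] by simp
    also have "\<dots> \<le> N * (Bc k * N^r / N + real k / N * (Bc k * N^r))"
      using hA[of i] hc1 N1 by (intro mult_left_mono) (auto intro: order.trans[OF abs_triangle_ineq])
    also have "\<dots> = (real k + 1) * Bc k * N^r" using N1 by (simp add: field_simps)
    finally show ?thesis .
  qed
  have t2: "\<bar>((knot p n (i + Suc k + 1) - knot p n m) * co p n k (i+1) m r - (if r = 0 then 0 else co p n k (i+1) m (r-1)))
       / (knot p n (i + Suc k + 1) - knot p n (i+1))\<bar> \<le> (real k + 2) * Bc k * N^r"
  proof -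
    have "\<bar>((knot p n (i + Suc k + 1) - knot p n m) * co p n k (i+1) m r - (if r = 0 then 0 else co p n k (i+1) m (r-1)))
       / (knot p n (i + Suc k + 1) - knot p n (i+1))\<bar> \<le> N * \<bar>(knot p n (i + Suc k + 1) - knot p n m) * co p n k (i+1) m r - (if r = 0 then 0 else co p n k (i+1) m (r-1))\<bar>"
      using div_bound[OF N1 gap2] by simp
    also have "\<dots> \<le> N * ((real k + 1) / N * (Bc k * N^r) + Bc k * N^r / N)"
      using hA[of "i+1"] hc2 N1 by (intro mult_left_mono) (auto intro: order.trans[OF abs_triangle_ineq4])
    also have "\<dots> = (real k + 2) * Bc k * N^r" using N1 by (simp add: field_simps)
    finally show ?thesis .
  qed
  have "\<bar>co p n (Suc k) i m r\<bar> \<le> (real k + 1) * Bc k * N^r + (real k + 2) * Bc k * N^r"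
  proof -
    let ?X1 = "((if r = 0 then 0 else co p n k i m (r-1)) + (knot p n m - knot p n i) * co p n k i m r)
       / (knot p n (i + Suc k) - knot p n i)"
    let ?X2 = "((knot p n (i + Suc k + 1) - knot p n m) * co p n k (i+1) m r - (if r = 0 then 0 else co p n k (i+1) m (r-1)))
       / (knot p n (i + Suc k + 1) - knot p n (i+1))"
    have e: "co p n (Suc k) i m r = ?X1 + ?X2" by (simp only: co.simps)
    show ?thesis unfolding e using t1 t2 abs_triangle_ineq[of ?X1 ?X2] by linarith
  qed
  also have "\<dots> = Bc (Suc k) * N^r" by (simp add: algebra_simps)
  finally show ?case by (simp add: N_def)
qed


definition Kb :: "real \<Rightarrow> nat \<Rightarrow> real" where
  "Kb \<beta> r = Beta (real r + 1) (\<beta> + 1)"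

lemma BI:
  fixes \<beta> c t :: real
  assumes b: "-1 < \<beta>" and ct: "c < t"
  shows "((\<lambda>y. (t - y) powr \<beta> * (y - c) ^ r) has_integral Kb \<beta> r * (t - c) powr (\<beta> + 1 + real r)) {c..t}"
proof -
  define f where "f = (\<lambda>s::real. s powr real r * (1 - s) powr \<beta>)"
  have B: "(f has_integral Kb \<beta> r) (cbox 0 1)"
    unfolding f_def Kb_def using has_integral_Beta_real[of "real r + 1" "\<beta> + 1"] b by simp
  define m where "m = 1 / (t - c)"
  have m: "m > 0" using ct by (simp add: m_def)
  from has_integral_affinity'[OF B m, of "- c / (t - c)"]
  have "((\<lambda>y. f (m * y + - c / (t - c))) has_integral Kb \<beta> r * (t - c)) (cbox c t)"
  proof -
    have e1: "(0 - - c / (t - c)) /\<^sub>R m = c" "(1 - - c / (t - c)) /\<^sub>R m = t"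
      using ct by (simp_all add: m_def field_simps)
    have e2: "Kb \<beta> r /\<^sub>R m ^ DIM(real) = Kb \<beta> r * (t - c)" by (simp add: m_def)
    assume "((\<lambda>x. f (m *\<^sub>R x + - c / (t - c))) has_integral Kb \<beta> r /\<^sub>R m ^ DIM(real))
      (cbox ((0 - - c / (t - c)) /\<^sub>R m) ((1 - - c / (t - c)) /\<^sub>R m))"
    then show ?thesis unfolding e1 e2 by simp
  qed
  then have I: "((\<lambda>y. (t - c) powr (\<beta> + real r) * f (m * y + - c / (t - c))) has_integral
      (t - c) powr (\<beta> + real r) * (Kb \<beta> r * (t - c))) {c..t}"
    by (intro has_integral_mult_right) simp
  have val: "(t - c) powr (\<beta> + real r) * (Kb \<beta> r * (t - c)) = Kb \<beta> r * (t - c) powr (\<beta> + 1 + real r)"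
    using ct by (simp add: powr_add algebra_simps)
  show ?thesis
  proof (rule has_integral_spike_finite[OF _ _ I[unfolded val]])
    show "finite {c, t}" by simp
    fix y assume y: "y \<in> {c..t} - {c, t}"
    then have y1: "c < y" "y < t" by auto
    have a: "m * y + - c / (t - c) = (y - c) / (t - c)" by (simp add: m_def diff_divide_distrib)
    have b1: "1 - (y - c) / (t - c) = (t - y) / (t - c)" using ct by (simp add: field_simps)
    have "(t - c) powr (\<beta> + real r) * f (m * y + - c / (t - c))
        = (t - c) powr (\<beta> + real r) * (((y - c) powr real r / (t - c) powr real r) * ((t - y) powr \<beta> / (t - c) powr \<beta>))"
      unfolding f_def a b1 using y1 ct by (simp add: powr_divide)
    also have "\<dots> = (t - y) powr \<beta> * (y - c) powr real r"
      using y1 ct by (simp add: powr_add field_simps)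
    also have "\<dots> = (t - y) powr \<beta> * (y - c) ^ r" using y1 by (simp add: powr_realpow)
    finally show "(t - y) powr \<beta> * (y - c) ^ r = (t - c) powr (\<beta> + real r) * f (m * y + - c / (t - c))" by simp
  qed
qed

lemma TP:
  fixes x \<gamma> :: real
  assumes g: "\<gamma> > 1"
  shows "((\<lambda>t. (max (t - x) 0) powr \<gamma>) has_real_derivative \<gamma> * (max (t - x) 0) powr (\<gamma> - 1)) (at t)"
proof (cases "t = x")
  case False
  show ?thesis
  proof (cases "t > x")
    case True
    have "((\<lambda>t. (t - x) powr \<gamma>) has_real_derivative \<gamma> * (t - x) powr (\<gamma> - 1)) (at t)"
      using True by (auto intro!: derivative_eq_intros)
    then have "((\<lambda>t. (t - x) powr \<gamma>) has_real_derivative \<gamma> * (max (t - x) 0) powr (\<gamma> - 1)) (at t)"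
      using True by simp
    then show ?thesis
      by (rule has_field_derivative_transform_within_open[where S="{x<..}"]) (use True in auto)
  next
    case False
    with \<open>t \<noteq> x\<close> have tx: "t < x" by auto
    have "((\<lambda>t. 0) has_real_derivative 0) (at t)" by simp
    then have "((\<lambda>t. (max (t - x) 0) powr \<gamma>) has_real_derivative 0) (at t)"
      by (rule has_field_derivative_transform_within_open[where S="{..<x}"]) (use tx in auto)
    then show ?thesis using tx by simp
  qed
next
  case True
  have "((\<lambda>y. ((max (y - x) 0) powr \<gamma> - (max (x - x) 0) powr \<gamma>) / (y - x)) \<longlongrightarrow> 0) (at x)"
  proof (rule Lim_null_comparison)
    show "\<forall>\<^sub>F y in at x. norm (((max (y - x) 0) powr \<gamma> - (max (x - x) 0) powr \<gamma>) / (y - x)) \<le> (max (y - x) 0) powr (\<gamma> - 1)"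
    proof (rule always_eventually, rule allI)
      fix y
      show "norm (((max (y - x) 0) powr \<gamma> - (max (x - x) 0) powr \<gamma>) / (y - x)) \<le> (max (y - x) 0) powr (\<gamma> - 1)"
      proof (cases "y > x")
        case True
        have "(y - x) powr \<gamma> = (y - x) powr (\<gamma> - 1) * (y - x)"
          using True by (simp add: powr_diff)
        then show ?thesis using True by simp
      qed simp
    qed
    have "((\<lambda>y. max (y - x) 0) \<longlongrightarrow> 0) (at x)"
      by (rule tendsto_eq_intros refl | simp)+
    then show "((\<lambda>y. (max (y - x) 0) powr (\<gamma> - 1)) \<longlongrightarrow> 0) (at x)"
      by (rule tendsto_zero_powrI) (use g in auto)
  qed
  then show ?thesis using True g by (simp add: has_field_derivative_iff)
qed


lemma cont_kernel:
  fixes u :: "real \<Rightarrow> real"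
  assumes uc: "continuous_on {0..c} u" and ct: "c < t"
  shows "continuous_on {0..c} (\<lambda>y. (t - y) powr \<delta> * u y)"
proof -
  have "continuous_on {0..c} (\<lambda>y. (t - y) powr \<delta>)"
    by (rule continuous_on_powr') (use ct in \<open>auto intro!: continuous_intros\<close>)
  then show ?thesis using uc by (intro continuous_on_mult) auto
qed

lemma leib:
  fixes u :: "real \<Rightarrow> real"
  assumes uc: "continuous_on {0..c} u" and ct: "c < t"
  shows "((\<lambda>s. integral {0..c} (\<lambda>y. (s - y) powr \<delta> * u y)) has_real_derivative
           \<delta> * integral {0..c} (\<lambda>y. (t - y) powr (\<delta> - 1) * u y)) (at t)"
proof -
  let ?U = "{c<..}"
  have "((\<lambda>s. integral (cbox 0 c) (\<lambda>y. (s - y) powr \<delta> * u y)) has_field_derivative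
          integral (cbox 0 c) (\<lambda>y. \<delta> * (t - y) powr (\<delta> - 1) * u y)) (at t within ?U)"
  proof (rule leibniz_rule_field_derivative[where fx="\<lambda>s y. \<delta> * (s - y) powr (\<delta> - 1) * u y"])
    fix s y assume s: "s \<in> ?U" and y: "y \<in> cbox 0 c"
    then have sy: "s - y > 0" by auto
    have "((\<lambda>s. (s - y) powr \<delta>) has_real_derivative \<delta> * (s - y) powr (\<delta> - of_nat 1) * 1) (at s)"
      by (rule DERIV_fun_powr) (use sy in \<open>auto intro!: derivative_eq_intros\<close>)
    from DERIV_cmult_right[OF this, of "u y"]
    have "((\<lambda>s. (s - y) powr \<delta> * u y) has_real_derivative \<delta> * (s - y) powr (\<delta> - 1) * u y) (at s)"
      by simp
    then show "((\<lambda>s. (s - y) powr \<delta> * u y) has_field_derivative \<delta> * (s - y) powr (\<delta> - 1) * u y) (at s within ?U)"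
      by (rule has_field_derivative_at_within)
  next
    fix s assume s: "s \<in> ?U"
    show "(\<lambda>y. (s - y) powr \<delta> * u y) integrable_on cbox 0 c"
      using cont_kernel[OF uc, of s \<delta>] s by (auto intro: integrable_continuous_interval)
  next
    have "continuous_on (?U \<times> cbox 0 c) (\<lambda>z. \<delta> * (fst z - snd z) powr (\<delta> - 1) * u (snd z))"
    proof (intro continuous_on_mult continuous_on_const)
      show "continuous_on (?U \<times> cbox 0 c) (\<lambda>z. (fst z - snd z) powr (\<delta> - 1))"
      proof (rule continuous_on_powr')
        show "continuous_on (?U \<times> cbox 0 c) (\<lambda>z. fst z - snd z)" by (intro continuous_intros)
        show "continuous_on (?U \<times> cbox 0 c) (\<lambda>z. \<delta> - 1)" by (rule continuous_on_const)
        show "\<forall>z\<in>?U \<times> cbox 0 c. 0 \<le> fst z - snd z \<and> (fst z - snd z = 0 \<longrightarrow> 0 < \<delta> - 1)"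
        proof
          fix z assume "z \<in> ?U \<times> cbox 0 c"
          then have "fst z > c" "snd z \<le> c" by (auto simp: mem_Times_iff)
          then show "0 \<le> fst z - snd z \<and> (fst z - snd z = 0 \<longrightarrow> 0 < \<delta> - 1)" by simp
        qed
      qed
      show "continuous_on (?U \<times> cbox 0 c) (\<lambda>z. u (snd z))"
      proof (rule continuous_on_compose2[OF uc continuous_on_snd[OF continuous_on_id]])
        show "snd ` (?U \<times> cbox 0 c) \<subseteq> {0..c}" by (auto simp: mem_Times_iff)
      qed
    qed
    then show "continuous_on (?U \<times> cbox 0 c) (\<lambda>(s, y). \<delta> * (s - y) powr (\<delta> - 1) * u y)"
      by (simp add: case_prod_beta')
  next
    show "t \<in> ?U" using ct by simp
  next
    show "convex ?U" by simp
  qed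
  moreover have "at t within ?U = at t" by (rule at_within_open) (use ct in auto)
  moreover have "integral (cbox 0 c) (\<lambda>y. \<delta> * (t - y) powr (\<delta> - 1) * u y) = \<delta> * integral {0..c} (\<lambda>y. (t - y) powr (\<delta> - 1) * u y)"
  proof -
    have "(\<lambda>y. (t - y) powr (\<delta> - 1) * u y) integrable_on {0..c}"
      using cont_kernel[OF uc ct, of "\<delta> - 1"] by (auto intro: integrable_continuous_interval)
    from integral_mult[OF this, of \<delta>] show ?thesis by (simp add: mult.assoc)
  qed
  ultimately show ?thesis by simp
qed

lemma powr_deriv:
  assumes "c < t"
  shows "((\<lambda>t. (t - c) powr e) has_real_derivative e * (t - c) powr (e - 1)) (at t)"
  using DERIV_fun_powr[of "\<lambda>t. t - c" 1 t e] assms by (auto intro!: derivative_eq_intros)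


lemma split_integral:
  fixes u :: "real \<Rightarrow> real" and a :: "nat \<Rightarrow> real"
  assumes b1: "-1 < \<beta>" and p1: "1 \<le> p" and c0: "0 \<le> c" and cx: "c < x"
    and uc: "continuous_on {0..c} u" and ct: "c < t" and td: "t < d"
    and uloc: "\<And>y. c \<le> y \<Longrightarrow> y < d \<Longrightarrow> u y = (\<Sum>r\<le>p. a r * (y - c)^r) + (if x \<le> y then J * (y - x)^p else 0)"
  shows "integral {0..t} (\<lambda>y. (t - y) powr \<beta> * u y) =
     integral {0..c} (\<lambda>y. (t - y) powr \<beta> * u y)
     + ((\<Sum>r\<le>p. a r * (Kb \<beta> r * (t - c) powr (\<beta> + 1 + real r))) + J * (Kb \<beta> p * (max (t - x) 0) powr (\<beta> + 1 + real p)))"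
proof -
  let ?f = "\<lambda>y. (t - y) powr \<beta> * u y"
  have I1: "(?f has_integral integral {0..c} ?f) {0..c}"
    using cont_kernel[OF uc ct, of \<beta>] by (auto intro: integrable_continuous_interval)
  have Isum: "((\<lambda>y. \<Sum>r\<le>p. a r * ((t - y) powr \<beta> * (y - c)^r)) has_integral
       (\<Sum>r\<le>p. a r * (Kb \<beta> r * (t - c) powr (\<beta> + 1 + real r)))) {c..t}"
    by (intro has_integral_sum has_integral_mult_right BI b1 ct) simp
  have IJ: "((\<lambda>y. if x \<le> y then J * ((t - y) powr \<beta> * (y - x)^p) else 0) has_integral
       J * (Kb \<beta> p * (max (t - x) 0) powr (\<beta> + 1 + real p))) {c..t}"
  proof (cases "t \<le> x")
    case True
    have "((\<lambda>y. 0) has_integral J * (Kb \<beta> p * (max (t - x) 0) powr (\<beta> + 1 + real p))) {c..t}"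
      using True by simp
    then show ?thesis
    proof (rule has_integral_eq[rotated])
      fix y assume "y \<in> {c..t}"
      then show "0 = (if x \<le> y then J * ((t - y) powr \<beta> * (y - x)^p) else 0)" using True by auto
    qed
  next
    case False
    have z: "((\<lambda>y. if x \<le> y then J * ((t - y) powr \<beta> * (y - x)^p) else 0) has_integral 0) {c..x}"
    proof (rule has_integral_eq[rotated])
      show "((\<lambda>y. 0) has_integral (0::real)) {c..x}" by simp
      fix y assume "y \<in> {c..x}"
      then show "0 = (if x \<le> y then J * ((t - y) powr \<beta> * (y - x)^p) else 0)" using p1 by auto
    qed
    have w: "((\<lambda>y. if x \<le> y then J * ((t - y) powr \<beta> * (y - x)^p) else 0) has_integral
        J * (Kb \<beta> p * (t - x) powr (\<beta> + 1 + real p))) {x..t}"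
    proof (rule has_integral_eq[rotated])
      show "((\<lambda>y. J * ((t - y) powr \<beta> * (y - x)^p)) has_integral J * (Kb \<beta> p * (t - x) powr (\<beta> + 1 + real p))) {x..t}"
        by (intro has_integral_mult_right BI b1) (use False in simp)
      fix y assume "y \<in> {x..t}"
      then show "J * ((t - y) powr \<beta> * (y - x)^p) = (if x \<le> y then J * ((t - y) powr \<beta> * (y - x)^p) else 0)" by auto
    qed
    from has_integral_combine[OF _ _ z w] cx False
    show ?thesis by simp
  qed
  have I2: "(?f has_integral ((\<Sum>r\<le>p. a r * (Kb \<beta> r * (t - c) powr (\<beta> + 1 + real r))) + J * (Kb \<beta> p * (max (t - x) 0) powr (\<beta> + 1 + real p)))) {c..t}"
  proof (rule has_integral_eq[rotated])
    show "((\<lambda>y. (\<Sum>r\<le>p. a r * ((t - y) powr \<beta> * (y - c)^r)) + (if x \<le> y then J * ((t - y) powr \<beta> * (y - x)^p) else 0)) has_integral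
        ((\<Sum>r\<le>p. a r * (Kb \<beta> r * (t - c) powr (\<beta> + 1 + real r))) + J * (Kb \<beta> p * (max (t - x) 0) powr (\<beta> + 1 + real p)))) {c..t}"
      by (rule has_integral_add[OF Isum IJ])
    fix y assume y: "y \<in> {c..t}"
    then have "u y = (\<Sum>r\<le>p. a r * (y - c)^r) + (if x \<le> y then J * (y - x)^p else 0)" using uloc td by auto
    then show "(\<Sum>r\<le>p. a r * ((t - y) powr \<beta> * (y - c)^r)) + (if x \<le> y then J * ((t - y) powr \<beta> * (y - x)^p) else 0) = ?f y"
      by (simp add: sum_distrib_left algebra_simps)
  qed
  from has_integral_combine[OF c0 less_imp_le[OF ct] I1 I2]
  show ?thesis by (rule integral_unique)
qed


lemma sum_powr_deriv:
  fixes a :: "nat \<Rightarrow> real"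
  assumes "c < t"
  shows "((\<lambda>t. \<Sum>r\<le>p. a r * (K r * (t - c) powr e r)) has_real_derivative
          (\<Sum>r\<le>p. a r * (K r * (e r * (t - c) powr (e r - 1))))) (at t)"
  by (intro DERIV_sum DERIV_cmult powr_deriv assms)

lemma sum_powr_deriv2:
  fixes a :: "nat \<Rightarrow> real"
  assumes "c < t"
  shows "((\<lambda>t. \<Sum>r\<le>p. a r * (K r * (E r * (t - c) powr f r))) has_real_derivative
          (\<Sum>r\<le>p. a r * (K r * (E r * (f r * (t - c) powr (f r - 1)))))) (at t)"
  by (intro DERIV_sum DERIV_cmult powr_deriv assms)

lemma main_local:
  fixes u :: "real \<Rightarrow> real" and a :: "nat \<Rightarrow> real"
  assumes b1: "-1 < \<beta>" and p2: "2 \<le> p" and c0: "0 \<le> c" and cx: "c < x" and xd: "x < d"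
    and uc: "continuous_on {0..c} u"
    and uloc: "\<And>y. c \<le> y \<Longrightarrow> y < d \<Longrightarrow> u y = (\<Sum>r\<le>p. a r * (y - c)^r) + (if x \<le> y then J * (y - x)^p else 0)"
  shows "deriv (deriv (\<lambda>t. integral {0..t} (\<lambda>y. (t - y) powr \<beta> * u y))) x
   = \<beta> * (\<beta> - 1) * integral {0..c} (\<lambda>y. (x - y) powr (\<beta> - 2) * u y)
     + (\<Sum>r\<le>p. a r * Kb \<beta> r * (\<beta> + 1 + real r) * (\<beta> + real r) * (x - c) powr (\<beta> + real r - 1))"
proof -
  define F where "F = (\<lambda>t. integral {0..t} (\<lambda>y. (t - y) powr \<beta> * u y))"
  define A where "A = (\<lambda>\<delta> t. integral {0..c} (\<lambda>y. (t - y) powr \<delta> * u y))"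
  define \<gamma> where "\<gamma> = \<beta> + 1 + real p"
  define e where "e = (\<lambda>r::nat. \<beta> + 1 + real r)"
  define K where "K = Kb \<beta>"
  define S where "S = (\<lambda>t. (\<Sum>r\<le>p. a r * (K r * (t - c) powr e r)) + J * (K p * (max (t - x) 0) powr \<gamma>))"
  define F1 where "F1 = (\<lambda>t. \<beta> * A (\<beta> - 1) t + ((\<Sum>r\<le>p. a r * (K r * (e r * (t - c) powr (e r - 1))))
                      + J * (K p * (\<gamma> * (max (t - x) 0) powr (\<gamma> - 1)))))"
  define F2 where "F2 = \<beta> * ((\<beta> - 1) * A (\<beta> - 1 - 1) x)
      + ((\<Sum>r\<le>p. a r * (K r * (e r * ((e r - 1) * (x - c) powr (e r - 1 - 1)))))
      + J * (K p * (\<gamma> * ((\<gamma> - 1) * (max (x - x) 0) powr (\<gamma> - 1 - 1)))))"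
  have g1: "\<gamma> > 1" "\<gamma> - 1 > 1" using b1 p2 by (auto simp: \<gamma>_def)
  let ?O = "{c<..<d}"
  have O: "open ?O" "x \<in> ?O" using cx xd by auto
  have FS: "F t = A \<beta> t + S t" if "t \<in> ?O" for t
    unfolding F_def A_def S_def K_def e_def \<gamma>_def
    by (rule split_integral[OF b1 _ c0 cx uc _ _ uloc]) (use that p2 in auto)
  have dF: "(F has_real_derivative F1 t) (at t)" if t: "t \<in> ?O" for t
  proof -
    have ct: "c < t" using t by auto
    have "((\<lambda>s. A \<beta> s + S s) has_real_derivative F1 t) (at t)"
      unfolding F1_def S_def A_def
      by (intro DERIV_add leib[OF uc ct] sum_powr_deriv[OF ct] DERIV_cmult TP g1)
    then show ?thesis
      by (rule has_field_derivative_transform_within_open[OF _ O(1) t]) (use FS in simp)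
  qed
  have dF1: "(F1 has_real_derivative F2) (at x)"
    unfolding F1_def F2_def A_def
    by (intro DERIV_add leib[OF uc cx] sum_powr_deriv2[OF cx] DERIV_cmult TP g1)
  have "(deriv F has_real_derivative F2) (at x)"
    by (rule has_field_derivative_transform_within_open[OF dF1 O]) (use dF DERIV_imp_deriv in metis)
  then have "deriv (deriv F) x = F2" by (rule DERIV_imp_deriv)
  also have "F2 = \<beta> * (\<beta> - 1) * integral {0..c} (\<lambda>y. (x - y) powr (\<beta> - 2) * u y)
     + (\<Sum>r\<le>p. a r * Kb \<beta> r * (\<beta> + 1 + real r) * (\<beta> + real r) * (x - c) powr (\<beta> + real r - 1))"
  proof -
    have "(\<Sum>r\<le>p. a r * (K r * (e r * ((e r - 1) * (x - c) powr (e r - 1 - 1)))))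
        = (\<Sum>r\<le>p. a r * Kb \<beta> r * (\<beta> + 1 + real r) * (\<beta> + real r) * (x - c) powr (\<beta> + real r - 1))"
      unfolding K_def e_def by (intro sum.cong refl) (simp add: algebra_simps)
    moreover have "\<beta> - 1 - 1 = \<beta> - 2" by simp
    ultimately show ?thesis unfolding F2_def A_def by simp
  qed
  finally show ?thesis unfolding F_def .
qed


definition GX :: "nat \<Rightarrow> nat \<Rightarrow> nat \<Rightarrow> nat" where
  "GX p n i = (\<Sum>k=i+1..i+p. kn p n k)"

lemma greville_GX: "n \<ge> 1 \<Longrightarrow> p \<ge> 1 \<Longrightarrow> greville p n i = real (GX p n i) / (real n * real p)"
  unfolding greville_def GX_def by (simp add: knot_kn sum_divide_distrib[symmetric])

lemma GX_bounds:
  assumes n: "n \<ge> 1" and p: "p \<ge> 2" and i: "2 \<le> i" "i \<le> n + p - 1"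
  shows "1 \<le> GX p n i" "GX p n i < n * p"
proof -
  have "kn p n (i+p) \<le> GX p n i" unfolding GX_def by (rule member_le_sum) (use p in auto)
  moreover have "kn p n (p+2) \<le> kn p n (i+p)" using i by (intro kn_mono) auto
  moreover have "kn p n (p+2) = 1" using n by (simp add: kn_def)
  ultimately show "1 \<le> GX p n i" by linarith
  have "GX p n i = kn p n (i+1) + (\<Sum>k=Suc (i+1)..i+p. kn p n k)"
    unfolding GX_def using p by (subst sum.atLeast_Suc_atMost) auto
  moreover have "kn p n (i+1) \<le> n - 1"
  proof -
    have "kn p n (i+1) \<le> kn p n (n+p)" using i by (intro kn_mono) auto
    also have "kn p n (n+p) = n - 1" by (simp add: kn_def)
    finally show ?thesis .
  qed
  moreover have "(\<Sum>k=Suc (i+1)..i+p. kn p n k) \<le> card {Suc (i+1)..i+p} * n"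
    using sum_bounded_above[of "{Suc (i+1)..i+p}" "kn p n" n] by (simp add: kn_def)
  moreover have "card {Suc (i+1)..i+p} = p - 1" using p by simp
  ultimately have "(\<Sum>k=Suc (i+1)..i+p. kn p n k) \<le> (p - 1) * n" "GX p n i = kn p n (i+1) + (\<Sum>k=Suc (i+1)..i+p. kn p n k)"  "kn p n (i+1) \<le> n - 1" by auto
  then have "GX p n i \<le> n - 1 + (p - 1) * n" by linarith
  also have "\<dots> < n * p"
  proof -
    have "(p - 1) * n + n = n * p" using p by (cases p) (auto simp: algebra_simps)
    then show ?thesis using n by linarith
  qed
  finally show "GX p n i < n * p" .
qed

lemma knot_val: "n \<ge> 1 \<Longrightarrow> q \<le> n \<Longrightarrow> knot p n (q + p + 1) = real q / real n"
  by (simp add: knot_kn kn_def)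

lemma local_data:
  assumes n: "n \<ge> 1" and p: "p \<ge> 2" and X: "1 \<le> X" "X < n * p"
    and x: "x = real X / (real n * real p)"
  shows "\<exists>m' d J. 0 \<le> knot p n m' \<and> knot p n m' < x \<and> x < d \<and> d \<le> 1 \<and>
     1 / (real n * real p) \<le> x - knot p n m' \<and> x - knot p n m' \<le> 1 / real n \<and>
     (\<forall>y. knot p n m' \<le> y \<longrightarrow> y < d \<longrightarrow> bspline p n p j y =
        (\<Sum>r\<le>p. co p n p j m' r * (y - knot p n m')^r) + (if x \<le> y then J * (y - x)^p else 0))"
proof -
  define q where "q = X div p"
  define \<rho> where "\<rho> = X mod p"
  have Xq: "X = q * p + \<rho>" unfolding q_def \<rho>_def by simp
  have \<rho>p: "\<rho> < p" unfolding \<rho>_def using p by simp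
  have qn: "q < n" unfolding q_def using X p by (simp add: less_mult_imp_div_less)
  define m where "m = q + p + 1"
  have km: "knot p n m = real q / real n" unfolding m_def using knot_val[OF n, of q p] qn by simp
  have km1: "knot p n (m+1) = real (q+1) / real n"
    unfolding m_def using knot_val[OF n, of "q+1" p] qn by (simp add: add.commute add.left_commute)
  have Nn: "real n > 0" "real p > 0" using n p by auto
  have xq: "x = real q / real n + real \<rho> / (real n * real p)"
    unfolding x Xq using Nn by (simp add: field_simps)
  have d1: "real (q+1) / real n \<le> 1" using qn Nn by (simp add: divide_le_eq_1)
  show ?thesis
  proof (cases "\<rho> = 0")
    case False
    have r1: "1 / (real n * real p) \<le> real \<rho> / (real n * real p)" using False Nn by (intro divide_right_mono) auto
    have r2: "real \<rho> / (real n * real p) < 1 / real n" using \<rho>p Nn by (simp add: field_simps)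
    show ?thesis
    proof (intro exI conjI allI impI)
      show "0 \<le> knot p n m" using km by simp
      have pos: "0 < 1 / (real n * real p)" using Nn by simp
      show "knot p n m < x" using xq km r1 pos by linarith
      show "x < knot p n (m+1)" using xq km km1 r2 by (simp add: add_divide_distrib)
      show "knot p n (m+1) \<le> 1" using km1 d1 by simp
      show "1 / (real n * real p) \<le> x - knot p n m" using xq km r1 by simp
      show "x - knot p n m \<le> 1 / real n" using xq km r2 by simp
      fix y assume "knot p n m \<le> y" "y < knot p n (m+1)"
      then show "bspline p n p j y = (\<Sum>r\<le>p. co p n p j m r * (y - knot p n m)^r) + (if x \<le> y then 0 * (y - x)^p else 0)"
        using bspline_pcf[OF n] by (simp add: pcf_def)
    qed
  next
    case True
    have q1: "q \<ge> 1" using X Xq True by (cases q) auto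
    have km0: "knot p n (m-1) = real (q-1) / real n"
      unfolding m_def using knot_val[OF n, of "q-1" p] qn q1 by (simp add: add.commute add.left_commute)
    have xm: "x = knot p n m" using xq km True by simp
    have diff: "x - knot p n (m-1) = 1 / real n" using xm km km0 q1 Nn by (simp add: diff_divide_distrib[symmetric] of_nat_diff)
    have "0 < 1 / real n" using Nn by simp
    then have lt1: "knot p n (m-1) < knot p n m" using diff xm by linarith
    have lt2: "knot p n m < knot p n (m+1)" using km km1 Nn by (simp add: divide_strict_right_mono)
    interpret simpknot p n m using n lt1 lt2 by unfold_locales (auto simp: m_def)
    have mm: "m - 1 + 1 = m" by (simp add: m_def)
    show ?thesis
    proof (intro exI conjI allI impI)
      show "0 \<le> knot p n (m-1)" using km0 by simp
      show "knot p n (m-1) < x" using lt1 xm by simp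
      show "x < knot p n (m+1)" using lt2 xm by simp
      show "knot p n (m+1) \<le> 1" using km1 d1 by simp
      have "1 / (real n * real p) \<le> 1 / real n"
        by (rule divide_left_mono) (use Nn p in auto)
      then show "1 / (real n * real p) \<le> x - knot p n (m-1)" using diff by simp
      show "x - knot p n (m-1) \<le> 1 / real n" using diff by simp
      fix y assume y: "knot p n (m-1) \<le> y" "y < knot p n (m+1)"
      show "bspline p n p j y = (\<Sum>r\<le>p. co p n p j (m-1) r * (y - knot p n (m-1))^r) + (if x \<le> y then Jmp p n m p j * (y - x)^p else 0)"
      proof (cases "y < knot p n m")
        case True
        then have "bspline p n p j y = pcf p n p j (m-1) y" using bspline_pcf[OF n, where m="m-1" and y=y and p=p] y mm by simp
        then show ?thesis using True xm by (simp add: pcf_def)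
      next
        case False
        then have "bspline p n p j y = pcf p n p j m y" using bspline_pcf[OF n, where m=m and y=y and p=p] y by simp
        also have "\<dots> = pcf p n p j (m-1) y + Jmp p n m p j * (y - knot p n m) ^ p" using jump[of p j y] by simp
        finally show ?thesis using False xm by (simp add: pcf_def)
      qed
    qed
  qed
qed


lemma pcf_cont: "continuous (at z within S) (pcf p n k i m)"
  unfolding pcf_def by (intro continuous_intros)

lemma bspline_cont:
  assumes n: "n \<ge> 1" and p: "p \<ge> 1" and c: "0 \<le> c" "c < 1"
  shows "continuous_on {0..c} (bspline p n p j)"
proof (unfold continuous_on_eq_continuous_within, intro ballI)
  fix z assume z: "z \<in> {0..c}"
  define q where "q = nat \<lfloor>z * real n\<rfloor>"
  have Nn: "real n > 0" using n by simp
  have zn0: "0 \<le> z * real n" using z by simp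
  have fq: "real q = of_int \<lfloor>z * real n\<rfloor>" unfolding q_def using zn0 by simp
  have q1: "real q \<le> z * real n" "z * real n < real q + 1" unfolding fq by linarith+
  have qn: "q < n"
  proof -
    have "z * real n < real n" using z c Nn by simp
    then have "real q < real n" using q1 by linarith
    then show ?thesis by simp
  qed
  define m where "m = q + p + 1"
  have km: "knot p n m = real q / real n" unfolding m_def using knot_val[OF n, of q p] qn by simp
  have km1: "knot p n (m+1) = real (q+1) / real n"
    unfolding m_def using knot_val[OF n, of "q+1" p] qn by (simp add: add.commute add.left_commute)
  have zm: "knot p n m \<le> z" "z < knot p n (m+1)" using q1 Nn unfolding km km1 by (simp_all add: field_simps)
  let ?u = "bspline p n p j"
  show "continuous (at z within {0..c}) ?u"
  proof (cases "knot p n m < z")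
    case True
    define \<delta> where "\<delta> = min (z - knot p n m) (knot p n (m+1) - z)"
    have \<delta>: "\<delta> > 0" using True zm by (simp add: \<delta>_def)
    show ?thesis
    proof (rule continuous_transform_within[OF pcf_cont \<delta> z])
      fix y assume "y \<in> {0..c}" "dist y z < \<delta>"
      then have "knot p n m \<le> y" "y < knot p n (m+1)" by (auto simp: \<delta>_def dist_real_def)
      then show "pcf p n p j m y = ?u y" using bspline_pcf[OF n, where m=m and y=y and p=p] by simp
    qed
  next
    case False
    then have zk: "z = knot p n m" using zm by simp
    show ?thesis
    proof (cases "q = 0")
      case True
      have \<delta>: "knot p n (m+1) > 0" using km1 Nn by simp
      have k0: "knot p n m = 0" using km True by simp
      show ?thesis
      proof (rule continuous_transform_within[OF pcf_cont \<delta> z])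
        fix y assume "y \<in> {0..c}" "dist y z < knot p n (m+1)"
        then have "knot p n m \<le> y" "y < knot p n (m+1)" using zk k0 by (auto simp: dist_real_def)
        then show "pcf p n p j m y = ?u y" using bspline_pcf[OF n, where m=m and y=y and p=p] by simp
      qed
    next
      case False
      have km0: "knot p n (m-1) = real (q-1) / real n"
        unfolding m_def using knot_val[OF n, of "q-1" p] qn False by (simp add: add.commute add.left_commute)
      have d0: "knot p n m - knot p n (m-1) = 1 / real n" using km km0 False Nn
        by (simp add: diff_divide_distrib[symmetric] of_nat_diff)
      have d1: "knot p n (m+1) - knot p n m = 1 / real n" using km km1 Nn
        by (simp add: diff_divide_distrib[symmetric])
      have pos: "0 < 1 / real n" using Nn by simp
      have lt1: "knot p n (m-1) < knot p n m" using d0 pos by linarith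
      have lt2: "knot p n m < knot p n (m+1)" using d1 pos by linarith
      interpret simpknot p n m using n lt1 lt2 by unfold_locales (auto simp: m_def)
      have mm: "m - 1 + 1 = m" by (simp add: m_def)
      define g where "g = (\<lambda>y. pcf p n p j (m-1) y + Jmp p n m p j * (max (y - knot p n m) 0) ^ p)"
      have gc: "continuous (at z within {0..c}) g" unfolding g_def pcf_def by (intro continuous_intros)
      show ?thesis
      proof (rule continuous_transform_within[OF gc pos z])
        fix y assume "y \<in> {0..c}" "dist y z < 1 / real n"
        then have y: "knot p n (m-1) < y" "y < knot p n (m+1)" using zk d0 d1 by (auto simp: dist_real_def)
        show "g y = ?u y"
        proof (cases "y < knot p n m")
          case True
          then have "?u y = pcf p n p j (m-1) y" using bspline_pcf[OF n, where m="m-1" and y=y and p=p] y mm by simp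
          then show ?thesis using True p by (simp add: g_def)
        next
          case False
          then have "?u y = pcf p n p j m y" using bspline_pcf[OF n, where m=m and y=y and p=p] y by simp
          also have "\<dots> = pcf p n p j (m-1) y + Jmp p n m p j * (y - knot p n m) ^ p" using jump[of p j y] by simp
          finally show ?thesis using False by (simp add: g_def)
        qed
      qed
    qed
  qed
qed


lemma kern_int:
  fixes \<beta> c x :: real
  assumes c0: "0 \<le> c" and cx: "c < x" and b: "\<beta> < 1"
  shows "((\<lambda>y. (x - y) powr (\<beta> - 2)) has_integral ((x - c) powr (\<beta> - 1) - (x - 0) powr (\<beta> - 1)) / (1 - \<beta>)) {0..c}"
proof -
  let ?f = "\<lambda>y. (x - y) powr (\<beta> - 1) / (1 - \<beta>)"
  have "(?f has_vector_derivative (x - y) powr (\<beta> - 2)) (at y within {0..c})" if y: "y \<in> {0..c}" for y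
  proof -
    have xy: "x - y > 0" using y cx by auto
    have "((\<lambda>y. (x - y) powr (\<beta> - 1)) has_real_derivative (\<beta> - 1) * (x - y) powr (\<beta> - 1 - of_nat 1) * (-1)) (at y)"
      by (rule DERIV_fun_powr) (use xy in \<open>auto intro!: derivative_eq_intros\<close>)
    from DERIV_cdivide[OF this, of "1 - \<beta>"]
    have "(?f has_real_derivative ((\<beta> - 1) * (x - y) powr (\<beta> - 1 - of_nat 1) * (-1)) / (1 - \<beta>)) (at y)" .
    moreover have "((\<beta> - 1) * (x - y) powr (\<beta> - 1 - of_nat 1) * (-1)) / (1 - \<beta>) = (x - y) powr (\<beta> - 2)"
    proof -
      have "(\<beta> - 1) * (x - y) powr (\<beta> - 1 - of_nat 1) * (-1) = (1 - \<beta>) * (x - y) powr (\<beta> - 2)" by (simp add: algebra_simps)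
      then show ?thesis using b by simp
    qed
    ultimately have "(?f has_real_derivative (x - y) powr (\<beta> - 2)) (at y)" by simp
    then show ?thesis
      by (simp add: has_real_derivative_iff_has_vector_derivative[symmetric] has_field_derivative_at_within)
  qed
  from fundamental_theorem_of_calculus[OF c0 this]
  show ?thesis by (simp add: diff_divide_distrib)
qed

lemma bound_general:
  fixes u :: "real \<Rightarrow> real"
  assumes c0: "0 \<le> c" and cx: "c < x" and b: "\<beta> < 1"
    and uc: "continuous_on {0..c} u" and uM: "\<And>y. \<bar>u y\<bar> \<le> M"
  shows "\<bar>integral {0..c} (\<lambda>y. (x - y) powr (\<beta> - 2) * u y)\<bar> \<le> M * ((x - c) powr (\<beta> - 1) / (1 - \<beta>))"
proof -
  have KI: "((\<lambda>y. (x - y) powr (\<beta> - 2)) has_integral ((x - c) powr (\<beta> - 1) - (x - 0) powr (\<beta> - 1)) / (1 - \<beta>)) {0..c}"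
    by (rule kern_int[OF c0 cx b])
  have f_int: "(\<lambda>y. (x - y) powr (\<beta> - 2) * u y) integrable_on {0..c}"
    using cont_kernel[OF uc cx, of "\<beta> - 2"] by (auto intro: integrable_continuous_interval)
  have g: "((\<lambda>y. M * (x - y) powr (\<beta> - 2)) has_integral M * (((x - c) powr (\<beta> - 1) - (x - 0) powr (\<beta> - 1)) / (1 - \<beta>))) {0..c}"
    by (rule has_integral_mult_right[OF KI])
  have "norm (integral {0..c} (\<lambda>y. (x - y) powr (\<beta> - 2) * u y)) \<le> integral {0..c} (\<lambda>y. M * (x - y) powr (\<beta> - 2))"
  proof (rule integral_norm_bound_integral[OF f_int])
    show "(\<lambda>y. M * (x - y) powr (\<beta> - 2)) integrable_on {0..c}" using g by blast
    fix y assume "y \<in> {0..c}"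
    have "\<bar>(x - y) powr (\<beta> - 2) * u y\<bar> = (x - y) powr (\<beta> - 2) * \<bar>u y\<bar>" by (simp add: abs_mult)
    also have "\<dots> \<le> (x - y) powr (\<beta> - 2) * M" by (rule mult_left_mono[OF uM]) simp
    finally show "norm ((x - y) powr (\<beta> - 2) * u y) \<le> M * (x - y) powr (\<beta> - 2)" by (simp add: mult.commute)
  qed
  also have "\<dots> = M * (((x - c) powr (\<beta> - 1) - (x - 0) powr (\<beta> - 1)) / (1 - \<beta>))" using g by (rule integral_unique)
  also have "\<dots> \<le> M * ((x - c) powr (\<beta> - 1) / (1 - \<beta>))"
  proof -
    have M0: "0 \<le> M" using uM[of 0] by simp
    have "((x - c) powr (\<beta> - 1) - (x - 0) powr (\<beta> - 1)) / (1 - \<beta>) \<le> (x - c) powr (\<beta> - 1) / (1 - \<beta>)"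
      using b by (intro divide_right_mono) auto
    then show ?thesis using M0 by (rule mult_left_mono)
  qed
  finally show ?thesis by simp
qed

lemma bound_support:
  fixes u :: "real \<Rightarrow> real"
  assumes a0: "0 \<le> a" and ab: "a \<le> b" and bx: "b < x" and b2: "\<beta> < 2"
    and uc: "continuous_on {0..b} u" and uM: "\<And>y. \<bar>u y\<bar> \<le> M" and u0: "\<And>y. y < a \<Longrightarrow> u y = 0"
  shows "\<bar>integral {0..b} (\<lambda>y. (x - y) powr (\<beta> - 2) * u y)\<bar> \<le> M * (x - b) powr (\<beta> - 2) * (b - a)"
proof -
  let ?f = "\<lambda>y. (x - y) powr (\<beta> - 2) * u y"
  have f_int: "?f integrable_on {0..b}"
    using cont_kernel[OF uc bx, of "\<beta> - 2"] by (auto intro: integrable_continuous_interval)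
  have fa: "?f integrable_on {a..b}" by (rule integrable_on_subinterval[OF f_int]) (use a0 in auto)
  have z: "(?f has_integral 0) {0..a}"
  proof (rule has_integral_spike_finite[where S="{a}" and f="\<lambda>y. 0"])
    fix y assume "y \<in> {0..a} - {a}" then show "?f y = 0" using u0 by auto
  qed auto
  have "integral {0..b} ?f = integral {0..a} ?f + integral {a..b} ?f"
    by (rule Henstock_Kurzweil_Integration.integral_combine[OF a0 ab f_int, symmetric])
  also have "integral {0..a} ?f = 0" using z by (rule integral_unique)
  finally have e: "integral {0..b} ?f = integral {a..b} ?f" by simp
  have "norm (integral {a..b} ?f) \<le> integral {a..b} (\<lambda>y. M * (x - b) powr (\<beta> - 2))"
  proof (rule integral_norm_bound_integral[OF fa])
    show "(\<lambda>y. M * (x - b) powr (\<beta> - 2)) integrable_on {a..b}" by (rule integrable_const_ivl)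
    fix y assume y: "y \<in> {a..b}"
    have "\<bar>?f y\<bar> = (x - y) powr (\<beta> - 2) * \<bar>u y\<bar>" by (simp add: abs_mult)
    also have "\<dots> \<le> (x - b) powr (\<beta> - 2) * M"
    proof (rule mult_mono[OF _ uM])
      show "(x - y) powr (\<beta> - 2) \<le> (x - b) powr (\<beta> - 2)" by (rule powr_mono2') (use y bx b2 in auto)
    qed auto
    finally show "norm (?f y) \<le> M * (x - b) powr (\<beta> - 2)" by (simp add: mult.commute)
  qed
  also have "\<dots> = M * (x - b) powr (\<beta> - 2) * (b - a)" using ab by simp
  finally show ?thesis unfolding e by simp
qed

lemma powr_grid:
  fixes h N P \<alpha> :: real
  assumes N: "N \<ge> 1" and P: "P \<ge> 1" and a: "0 < \<alpha>"
    and h1: "1 / (N * P) \<le> h" and h2: "h \<le> 1 / N"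
  shows "h powr (real r - \<alpha>) \<le> P powr \<alpha> * N powr (\<alpha> - real r)"
proof -
  have NP: "0 < N * P" using N P by simp
  have hp: "0 < h" using h1 NP by (smt (verit) divide_pos_pos)
  show ?thesis
  proof (cases "0 \<le> real r - \<alpha>")
    case True
    have "h powr (real r - \<alpha>) \<le> (1 / N) powr (real r - \<alpha>)" by (rule powr_mono2[OF True]) (use hp h2 in auto)
    also have "\<dots> = N powr (\<alpha> - real r)" using N by (simp add: powr_divide powr_minus_divide[symmetric] powr_minus)
    also have "\<dots> \<le> P powr \<alpha> * N powr (\<alpha> - real r)"
    proof -
      have "1 \<le> P powr \<alpha>" using P a by (simp add: ge_one_powr_ge_zero)
      then show ?thesis using N by (simp add: mult_le_cancel_right1)
    qed
    finally show ?thesis .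
  next
    case False
    have "h powr (real r - \<alpha>) \<le> (1 / (N * P)) powr (real r - \<alpha>)" by (rule powr_mono2') (use False hp h1 NP in auto)
    also have "\<dots> = (N * P) powr (\<alpha> - real r)"
    proof -
      have "(1 / (N * P)) powr (real r - \<alpha>) = 1 / (N * P) powr (real r - \<alpha>)" using NP by (simp add: powr_divide)
      also have "\<dots> = (N * P) powr (- (real r - \<alpha>))" by (rule powr_minus_divide[symmetric])
      finally show ?thesis by simp
    qed
    also have "\<dots> = N powr (\<alpha> - real r) * P powr (\<alpha> - real r)" using N P by (simp add: powr_mult)
    also have "\<dots> \<le> N powr (\<alpha> - real r) * P powr \<alpha>"
      by (rule mult_left_mono) (use P in \<open>auto intro: powr_mono\<close>)
    finally show ?thesis by (simp add: mult.commute)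
  qed
qed


lemma gen_formula:
  assumes n: "n \<ge> 1" and p: "p \<ge> 2" and i: "2 \<le> i" "i \<le> n + p - 1"
    and b1: "-1 < \<beta>"
  shows "\<exists>m'. 0 \<le> knot p n m' \<and> knot p n m' < greville p n i \<and> greville p n i < 1 \<and>
     1 / (real n * real p) \<le> greville p n i - knot p n m' \<and> greville p n i - knot p n m' \<le> 1 / real n \<and>
     deriv (deriv (\<lambda>t. integral {0..t} (\<lambda>y. (t - y) powr \<beta> * bspline p n p j y))) (greville p n i)
     = \<beta> * (\<beta> - 1) * integral {0..knot p n m'} (\<lambda>y. (greville p n i - y) powr (\<beta> - 2) * bspline p n p j y)
     + (\<Sum>r\<le>p. co p n p j m' r * Kb \<beta> r * (\<beta> + 1 + real r) * (\<beta> + real r) * (greville p n i - knot p n m') powr (\<beta> + real r - 1))"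
proof -
  define x where "x = greville p n i"
  have X: "1 \<le> GX p n i" "GX p n i < n * p" using GX_bounds[OF n p i] by auto
  have xe: "x = real (GX p n i) / (real n * real p)" unfolding x_def using greville_GX[OF n] p by simp
  have x1: "x < 1"
  proof -
    have "real (GX p n i) < real (n * p)" using X(2) by (simp only: of_nat_less_iff)
    then have "real (GX p n i) < real n * real p" by simp
    then show ?thesis unfolding xe using n p by (simp add: divide_less_eq)
  qed
  obtain m' d J where D: "0 \<le> knot p n m'" "knot p n m' < x" "x < d" "d \<le> 1"
     "1 / (real n * real p) \<le> x - knot p n m'" "x - knot p n m' \<le> 1 / real n"
     "\<forall>y. knot p n m' \<le> y \<longrightarrow> y < d \<longrightarrow> bspline p n p j y =
        (\<Sum>r\<le>p. co p n p j m' r * (y - knot p n m')^r) + (if x \<le> y then J * (y - x)^p else 0)"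
    using local_data[OF n p X xe, of j] by blast
  have uc: "continuous_on {0..knot p n m'} (bspline p n p j)"
    by (rule bspline_cont[OF n]) (use p D x1 in auto)
  have "deriv (deriv (\<lambda>t. integral {0..t} (\<lambda>y. (t - y) powr \<beta> * bspline p n p j y))) x
     = \<beta> * (\<beta> - 1) * integral {0..knot p n m'} (\<lambda>y. (x - y) powr (\<beta> - 2) * bspline p n p j y)
     + (\<Sum>r\<le>p. co p n p j m' r * Kb \<beta> r * (\<beta> + 1 + real r) * (\<beta> + real r) * (x - knot p n m') powr (\<beta> + real r - 1))"
    by (rule main_local[OF b1 p D(1) D(2) D(3) uc]) (use D(7) in auto)
  then show ?thesis using D x1 unfolding x_def by blast
qed


theorem lemma6p1:
  fixes \<alpha> :: real and p :: nat
  assumes "1 < \<alpha>" and "\<alpha> < 2" and "p \<ge> 2"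
  shows "\<exists>c :: real. \<forall>n :: nat. n \<ge> 1 \<longrightarrow>
     (\<forall>i \<in> {2..n+p-1}. \<forall>j \<in> {2..n+p-1}.
        \<bar>AL \<alpha> p n (i - 1) (j - 1)\<bar> \<le>
          (if greville p n i \<le> knot p n j then 0
           else if greville p n i \<le> knot p n (j + p + 1) + 1 / real n
             then c * real n powr \<alpha>
           else c * (greville p n i - knot p n (j + p + 1)) powr (- \<alpha>)))"
proof -
  note a1 = assms(1) and a2 = assms(2) and p = assms(3)
  define \<beta> where "\<beta> = 1 - \<alpha>"
  have b1: "-1 < \<beta>" "\<beta> < 1" "\<beta> < 2" "\<beta> - 1 = - \<alpha>" using a1 a2 by (auto simp: \<beta>_def)
  define L where "L = (\<lambda>r::nat. \<bar>Kb \<beta> r * (\<beta> + 1 + real r) * (\<beta> + real r)\<bar>)"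
  define C2 where "C2 = \<bar>\<beta> * (\<beta> - 1)\<bar> * 2^p * (real p powr \<alpha> / (1 - \<beta>)) + (\<Sum>r\<le>p. Bc p * L r * real p powr \<alpha>)"
  define C3 where "C3 = \<bar>\<beta> * (\<beta> - 1)\<bar> * 2^p * (real p + 1)"
  define G where "G = \<bar>1 / Gamma (2 - \<alpha>)\<bar>"
  have C2: "C2 \<ge> 0" unfolding C2_def L_def using b1 Bc_pos[of p]
    by (intro add_nonneg_nonneg mult_nonneg_nonneg sum_nonneg divide_nonneg_nonneg) auto
  have C3: "C3 \<ge> 0" unfolding C3_def by simp
  have G0: "G \<ge> 0" unfolding G_def by simp
  show ?thesis
  proof (rule exI[of _ "G * (C2 + C3)"], intro allI impI ballI)
    fix n i j assume n: "n \<ge> 1" and i: "i \<in> {2..n+p-1}" and j: "j \<in> {2..n+p-1}"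
    define x where "x = greville p n i"
    define u where "u = bspline p n p j"
    define D where "D = deriv (deriv (\<lambda>t. integral {0..t} (\<lambda>y. (t - y) powr \<beta> * u y))) x"
    have nr: "real n \<ge> 1" using n by simp
    have pr: "real p \<ge> 1" using p by simp
    have ALD: "\<bar>AL \<alpha> p n (i-1) (j-1)\<bar> = G * \<bar>D\<bar>"
    proof -
      have "i - 1 + 1 = i" "j - 1 + 1 = j" using i j by auto
      then have "AL \<alpha> p n (i-1) (j-1) = 1 / Gamma (2 - \<alpha>) * D"
        unfolding AL_def RL_left_def D_def u_def x_def \<beta>_def by simp
      then show ?thesis unfolding G_def by (simp add: abs_mult)
    qed
    have iI: "2 \<le> i" "i \<le> n + p - 1" using i by auto
    obtain m' where M: "0 \<le> knot p n m'" "knot p n m' < x" "x < 1"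
       "1 / (real n * real p) \<le> x - knot p n m'" "x - knot p n m' \<le> 1 / real n"
       "D = \<beta> * (\<beta> - 1) * integral {0..knot p n m'} (\<lambda>y. (x - y) powr (\<beta> - 2) * u y)
         + (\<Sum>r\<le>p. co p n p j m' r * Kb \<beta> r * (\<beta> + 1 + real r) * (\<beta> + real r) * (x - knot p n m') powr (\<beta> + real r - 1))"
      using gen_formula[OF n p iI b1(1), of j] unfolding D_def u_def x_def by blast
    define c where "c = knot p n m'"
    define h where "h = x - c"
    have hpos: "h > 0" using M by (simp add: h_def c_def)
    have uM: "\<And>y. \<bar>u y\<bar> \<le> 2^p" unfolding u_def by (rule bspline_bound[OF n])
    have ucont: "\<And>b. 0 \<le> b \<Longrightarrow> b < 1 \<Longrightarrow> continuous_on {0..b} u"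
      unfolding u_def by (rule bspline_cont[OF n]) (use p in auto)
    have case1: "D = 0" if xa: "x \<le> knot p n j"
    proof -
      have mj: "m' < j"
      proof (rule ccontr)
        assume "\<not> m' < j"
        then have "knot p n j \<le> knot p n m'" by (intro knot_mono[OF n]) auto
        then show False using M(2) xa by simp
      qed
      have co0: "co p n p j m' r = 0" for r using co_supp[of m' j p p n r] mj by simp
      have "integral {0..c} (\<lambda>y. (x - y) powr (\<beta> - 2) * u y) = integral {0..c} (\<lambda>y. 0)"
      proof (rule integral_cong)
        fix y assume y: "y \<in> {0..c}"
        have "u y = 0"
        proof (rule ccontr)
          assume "u y \<noteq> 0"
          then have "knot p n j \<le> y" using bspline_supp[OF n] unfolding u_def by blast
          then show False using y M(2) xa by (simp add: c_def)
        qed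
        then show "(x - y) powr (\<beta> - 2) * u y = 0" by simp
      qed
      then show ?thesis using M(6) co0 by (simp add: c_def)
    qed
    have case2: "\<bar>D\<bar> \<le> C2 * real n powr \<alpha>"
    proof -
      have I: "\<bar>integral {0..c} (\<lambda>y. (x - y) powr (\<beta> - 2) * u y)\<bar> \<le> 2^p * (h powr (\<beta> - 1) / (1 - \<beta>))"
        unfolding h_def using bound_general[OF M(1) M(2) b1(2) ucont[OF M(1)], of "2^p"] M(3) M(2) uM
        by (simp add: c_def)
      have hp: "h powr (\<beta> - 1) \<le> real p powr \<alpha> * real n powr \<alpha>"
        using powr_grid[OF nr pr _ _ _, of \<alpha> h 0] a1 M(4) M(5) b1(4) by (simp add: h_def c_def)
      have T1: "\<bar>\<beta> * (\<beta> - 1) * integral {0..c} (\<lambda>y. (x - y) powr (\<beta> - 2) * u y)\<bar>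
          \<le> \<bar>\<beta> * (\<beta> - 1)\<bar> * 2^p * (real p powr \<alpha> / (1 - \<beta>)) * real n powr \<alpha>"
      proof -
        have "\<bar>\<beta> * (\<beta> - 1) * integral {0..c} (\<lambda>y. (x - y) powr (\<beta> - 2) * u y)\<bar>
            \<le> \<bar>\<beta> * (\<beta> - 1)\<bar> * (2^p * (h powr (\<beta> - 1) / (1 - \<beta>)))"
          unfolding abs_mult[of "\<beta> * (\<beta> - 1)"] by (rule mult_left_mono[OF I]) simp
        also have "\<dots> \<le> \<bar>\<beta> * (\<beta> - 1)\<bar> * (2^p * (real p powr \<alpha> * real n powr \<alpha> / (1 - \<beta>)))"
          using hp b1 by (intro mult_left_mono divide_right_mono) auto
        finally show ?thesis by (simp add: mult_ac)
      qed
      have T2: "\<bar>co p n p j m' r * Kb \<beta> r * (\<beta> + 1 + real r) * (\<beta> + real r) * h powr (\<beta> + real r - 1)\<bar>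
          \<le> Bc p * L r * real p powr \<alpha> * real n powr \<alpha>" for r
      proof -
        have e1: "\<beta> + real r - 1 = real r - \<alpha>" using b1(4) by simp
        have hr: "h powr (\<beta> + real r - 1) \<le> real p powr \<alpha> * real n powr (\<alpha> - real r)"
          unfolding e1 using powr_grid[OF nr pr _ _ _, of \<alpha> h r] a1 M(4) M(5) by (simp add: h_def c_def)
        have "\<bar>co p n p j m' r * Kb \<beta> r * (\<beta> + 1 + real r) * (\<beta> + real r) * h powr (\<beta> + real r - 1)\<bar>
            = \<bar>co p n p j m' r\<bar> * L r * h powr (\<beta> + real r - 1)"
          unfolding L_def by (simp add: abs_mult mult_ac)
        also have "\<dots> \<le> (Bc p * real n ^ r) * L r * (real p powr \<alpha> * real n powr (\<alpha> - real r))"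
          using co_bound[OF n, of p p j m' r] hr unfolding L_def
          by (intro mult_mono) auto
        also have "real n ^ r * real n powr (\<alpha> - real r) = real n powr \<alpha>"
          using nr by (simp add: powr_realpow[symmetric] powr_add[symmetric])
        then have "(Bc p * real n ^ r) * L r * (real p powr \<alpha> * real n powr (\<alpha> - real r)) = Bc p * L r * real p powr \<alpha> * real n powr \<alpha>"
          by (simp add: mult_ac)
        finally show ?thesis .
      qed
      have "\<bar>D\<bar> \<le> \<bar>\<beta> * (\<beta> - 1) * integral {0..c} (\<lambda>y. (x - y) powr (\<beta> - 2) * u y)\<bar>
          + \<bar>\<Sum>r\<le>p. co p n p j m' r * Kb \<beta> r * (\<beta> + 1 + real r) * (\<beta> + real r) * h powr (\<beta> + real r - 1)\<bar>"
        unfolding M(6) h_def c_def by (rule abs_triangle_ineq)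
      also have "\<dots> \<le> \<bar>\<beta> * (\<beta> - 1)\<bar> * 2^p * (real p powr \<alpha> / (1 - \<beta>)) * real n powr \<alpha>
          + (\<Sum>r\<le>p. Bc p * L r * real p powr \<alpha> * real n powr \<alpha>)"
        by (intro add_mono T1 order.trans[OF sum_abs] sum_mono T2)
      also have "\<dots> = C2 * real n powr \<alpha>" unfolding C2_def distrib_right sum_distrib_right by (simp add: mult_ac)
      finally show ?thesis .
    qed
    have case3: "\<bar>D\<bar> \<le> C3 * (x - knot p n (j + p + 1)) powr (- \<alpha>)"
      if xb: "knot p n (j + p + 1) + 1 / real n < x"
    proof -
      define b where "b = knot p n (j + p + 1)"
      define a where "a = knot p n j"
      have b0: "0 \<le> b" unfolding b_def by (rule knot_ge0[OF n])
      have a0: "0 \<le> a" unfolding a_def by (rule knot_ge0[OF n])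
      have ab: "a \<le> b" unfolding a_def b_def by (rule knot_mono[OF n]) simp
      have ninv: "0 < 1 / real n" using nr by simp
      have bx: "b < x" using xb ninv unfolding b_def by linarith
      have ub: "continuous_on {0..b} u" using ucont[OF b0] bx M(3) by simp
      have Db: "D = \<beta> * (\<beta> - 1) * integral {0..b} (\<lambda>y. (x - y) powr (\<beta> - 2) * u y)
         + (\<Sum>r\<le>p. (\<lambda>r. 0) r * Kb \<beta> r * (\<beta> + 1 + real r) * (\<beta> + real r) * (x - b) powr (\<beta> + real r - 1))"
        unfolding D_def
      proof (rule main_local[OF b1(1) p b0 bx _ ub, of "x + 1" "\<lambda>r. 0" 0])
        fix y assume y: "b \<le> y" "y < x + 1"
        have "u y = 0"
        proof (rule ccontr)
          assume "u y \<noteq> 0"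
          then have "y < knot p n (j + p + 1)" using bspline_supp[OF n] unfolding u_def by blast
          then show False using y by (simp add: b_def)
        qed
        then show "u y = (\<Sum>r\<le>p. (\<lambda>r. 0) r * (y - b) ^ r) + (if x \<le> y then 0 * (y - x) ^ p else 0)" by simp
      qed simp
      have u0: "u y = 0" if "y < a" for y
      proof (rule ccontr)
        assume "u y \<noteq> 0"
        then have "knot p n j \<le> y" using bspline_supp[OF n] unfolding u_def by blast
        then show False using that by (simp add: a_def)
      qed
      have I: "\<bar>integral {0..b} (\<lambda>y. (x - y) powr (\<beta> - 2) * u y)\<bar> \<le> 2^p * (x - b) powr (\<beta> - 2) * (b - a)"
        by (rule bound_support[OF a0 ab bx b1(3) ub uM u0])
      have ba: "b - a \<le> (real p + 1) * (x - b)"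
      proof -
        have "b - a \<le> real (j + p + 1 - j) / real n" unfolding a_def b_def by (rule knot_diff_le[OF n]) simp
        also have "\<dots> = (real p + 1) * (1 / real n)" by simp
        also have "\<dots> \<le> (real p + 1) * (x - b)" using xb by (intro mult_left_mono) (auto simp: b_def)
        finally show ?thesis .
      qed
      have "\<bar>D\<bar> = \<bar>\<beta> * (\<beta> - 1)\<bar> * \<bar>integral {0..b} (\<lambda>y. (x - y) powr (\<beta> - 2) * u y)\<bar>"
        unfolding Db by (simp add: abs_mult)
      also have "\<dots> \<le> \<bar>\<beta> * (\<beta> - 1)\<bar> * (2^p * (x - b) powr (\<beta> - 2) * ((real p + 1) * (x - b)))"
        using I ba by (intro mult_left_mono order.trans[OF I] mult_left_mono[OF ba]) auto
      also have "\<dots> = C3 * ((x - b) powr (\<beta> - 2) * (x - b))" unfolding C3_def by (simp add: mult_ac)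
      also have "(x - b) powr (\<beta> - 2) * (x - b) = (x - b) powr (- \<alpha>)"
      proof -
        have "(x - b) powr (\<beta> - 2) * (x - b) = (x - b) powr (\<beta> - 2) * (x - b) powr 1" using bx by simp
        also have "\<dots> = (x - b) powr (\<beta> - 2 + 1)" by (rule powr_add[symmetric])
        also have "\<beta> - 2 + 1 = - \<alpha>" using b1(4) by simp
        finally show ?thesis .
      qed
      finally show ?thesis by (simp add: b_def)
    qed
    have fin: "G * \<bar>D\<bar> \<le>
          (if x \<le> knot p n j then 0
           else if x \<le> knot p n (j + p + 1) + 1 / real n
             then G * (C2 + C3) * real n powr \<alpha>
           else G * (C2 + C3) * (x - knot p n (j + p + 1)) powr (- \<alpha>))"
    proof (cases "x \<le> knot p n j")
      case True then show ?thesis using case1 by simp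
    next
      case False
      show ?thesis
      proof (cases "x \<le> knot p n (j + p + 1) + 1 / real n")
        case True
        have "G * \<bar>D\<bar> \<le> G * (C2 * real n powr \<alpha>)" by (rule mult_left_mono[OF case2 G0])
        also have "\<dots> \<le> G * (C2 + C3) * real n powr \<alpha>" using C3 G0 by (simp add: algebra_simps)
        finally show ?thesis using False True by simp
      next
        case F2: False
        have "G * \<bar>D\<bar> \<le> G * (C3 * (x - knot p n (j + p + 1)) powr (- \<alpha>))"
          by (rule mult_left_mono[OF case3 G0]) (use F2 in simp)
        also have "\<dots> \<le> G * (C2 + C3) * (x - knot p n (j + p + 1)) powr (- \<alpha>)" using C2 G0 by (simp add: algebra_simps)
        finally show ?thesis using False F2 by simp
      qed
    qed
    then show "\<bar>AL \<alpha> p n (i - 1) (j - 1)\<bar> \<le>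
          (if greville p n i \<le> knot p n j then 0
           else if greville p n i \<le> knot p n (j + p + 1) + 1 / real n
             then G * (C2 + C3) * real n powr \<alpha>
           else G * (C2 + C3) * (greville p n i - knot p n (j + p + 1)) powr (- \<alpha>))"
      unfolding ALD x_def .
  qed
qed


end
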